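(* Let $\Gamma=(V,E)$ be a graph without isolated vertices and let $k\le 1$ be an integer. If $S$ is a minimal global offensive $k$-alliance in $\Gamma$, then $\overline{S}=V\setminus S$ is a dominating set in $\Gamma$.
   Context: Graphs are finite and simple. For $S\subseteq V$ and $v\in V$, $\delta_S(v)$ is the number of neighbours of $v$ in $S$, $\overline{S}=V\setminus S$, and $\partial(S)$ the set of vertices of $\overline{S}$ with a neighbour in $S$. A nonempty $S$ is an offensive $k$-alliance if $\delta_S(v)\ge\delta_{\overline{S}}(v)+k$ for all $v\in\partial(S)$, and a global offensive $k$-alliance if moreover it is dominating (every vertex of $\overline{S}$ has a neighbour in $S$). A global offensive $k$-alliance $S$ is minimal if no proper subset of $S$ is a global offensive $k$-alliance. *)

theory Defs
  imports Main
begin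

definition simple_graph :: "'a set \<Rightarrow> ('a \<Rightarrow> 'a \<Rightarrow> bool) \<Rightarrow> bool" where
  "simple_graph V E \<longleftrightarrow> finite V \<and> (\<forall>u v. E u v \<longrightarrow> u \<in> V \<and> v \<in> V)
     \<and> (\<forall>u v. E u v \<longrightarrow> E v u) \<and> (\<forall>v. \<not> E v v)"

definition no_isolated :: "'a set \<Rightarrow> ('a \<Rightarrow> 'a \<Rightarrow> bool) \<Rightarrow> bool" where
  "no_isolated V E \<longleftrightarrow> (\<forall>v\<in>V. \<exists>u. E v u)"

definition delta :: "('a \<Rightarrow> 'a \<Rightarrow> bool) \<Rightarrow> 'a set \<Rightarrow> 'a \<Rightarrow> nat" where
  "delta E S v = card {u \<in> S. E v u}"

definition boundary :: "'a set \<Rightarrow> ('a \<Rightarrow> 'a \<Rightarrow> bool) \<Rightarrow> 'a set \<Rightarrow> 'a set" where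
  "boundary V E S = {v \<in> V - S. \<exists>u\<in>S. E v u}"

definition dominating :: "'a set \<Rightarrow> ('a \<Rightarrow> 'a \<Rightarrow> bool) \<Rightarrow> 'a set \<Rightarrow> bool" where
  "dominating V E D \<longleftrightarrow> D \<subseteq> V \<and> (\<forall>v\<in>V - D. \<exists>u\<in>D. E v u)"

definition offensive_alliance :: "'a set \<Rightarrow> ('a \<Rightarrow> 'a \<Rightarrow> bool) \<Rightarrow> int \<Rightarrow> 'a set \<Rightarrow> bool" where
  "offensive_alliance V E k S \<longleftrightarrow> S \<noteq> {} \<and> S \<subseteq> V \<and>
     (\<forall>v\<in>boundary V E S. int (delta E S v) \<ge> int (delta E (V - S) v) + k)"

definition global_offensive_alliance :: "'a set \<Rightarrow> ('a \<Rightarrow> 'a \<Rightarrow> bool) \<Rightarrow> int \<Rightarrow> 'a set \<Rightarrow> bool" where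
  "global_offensive_alliance V E k S \<longleftrightarrow> offensive_alliance V E k S \<and> dominating V E S"

definition minimal_global_offensive_alliance :: "'a set \<Rightarrow> ('a \<Rightarrow> 'a \<Rightarrow> bool) \<Rightarrow> int \<Rightarrow> 'a set \<Rightarrow> bool" where
  "minimal_global_offensive_alliance V E k S \<longleftrightarrow> global_offensive_alliance V E k S \<and>
     (\<forall>T. T \<subset> S \<longrightarrow> \<not> global_offensive_alliance V E k T)"

end

theory Submission
  imports Defs
begin

theorem mainTheorem8:
  fixes V :: "'a set" and E :: "'a \<Rightarrow> 'a \<Rightarrow> bool" and k :: int and S :: "'a set"
  assumes "simple_graph V E"
    and "no_isolated V E"
    and "k \<le> 1"
    and "minimal_global_offensive_alliance V E k S"
  shows "dominating V E (V - S)"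
proof (rule ccontr)
  assume nd: "\<not> dominating V E (V - S)"
  have fin: "finite V" and inV: "\<And>u w. E u w \<Longrightarrow> u \<in> V \<and> w \<in> V"
    and sym: "\<And>u w. E u w \<Longrightarrow> E w u" and irr: "\<And>u. \<not> E u u"
    using assms(1) unfolding simple_graph_def by auto
  have gS: "global_offensive_alliance V E k S" and minS: "\<And>T. T \<subset> S \<Longrightarrow> \<not> global_offensive_alliance V E k T"
    using assms(4) unfolding minimal_global_offensive_alliance_def by auto
  have SV: "S \<subseteq> V" and offS: "\<And>w. w \<in> boundary V E S \<Longrightarrow> int (delta E S w) \<ge> int (delta E (V - S) w) + k"
    and domS: "\<And>w. w \<in> V - S \<Longrightarrow> \<exists>u\<in>S. E w u"
    using gS unfolding global_offensive_alliance_def offensive_alliance_def dominating_def by auto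
  obtain v where vS: "v \<in> S" "v \<in> V" and nv: "\<And>u. u \<in> V - S \<Longrightarrow> \<not> E v u"
    using nd SV unfolding dominating_def by auto
  obtain u0 where u0: "E v u0" using assms(2) vS unfolding no_isolated_def by auto
  have u0S: "u0 \<in> S" using nv u0 inV by blast
  have u0v: "u0 \<noteq> v" using u0 irr by auto
  define T where "T = S - {v}"
  have TS: "T \<subset> S" using vS unfolding T_def by auto
  have notnb: "\<And>w. w \<in> V - S \<Longrightarrow> \<not> E w v" using nv sym by blast
  have eq1: "\<And>w. w \<in> V - S \<Longrightarrow> delta E T w = delta E S w"
    unfolding delta_def T_def by (metis (lifting) Diff_iff notnb singletonD)
  have eq2: "\<And>w. w \<in> V - S \<Longrightarrow> delta E (V - T) w = delta E (V - S) w"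
  proof -
    fix w assume "w \<in> V - S"
    hence "{u \<in> V - T. E w u} = {u \<in> V - S. E w u}" using notnb unfolding T_def by auto
    thus "delta E (V - T) w = delta E (V - S) w" unfolding delta_def by simp
  qed
  have dv1: "delta E T v \<ge> 1"
  proof -
    have "u0 \<in> {u \<in> T. E v u}" using u0 u0S u0v unfolding T_def by auto
    moreover have "finite {u \<in> T. E v u}" using fin SV unfolding T_def
      by (metis (no_types, lifting) Diff_subset finite_subset mem_Collect_eq subsetI subset_iff)
    ultimately show ?thesis unfolding delta_def
      by (metis One_nat_def Suc_leI card_gt_0_iff empty_iff)
  qed
  have dv0: "delta E (V - T) v = 0"
  proof -
    have "{u \<in> V - T. E v u} = {}" using nv irr unfolding T_def by blast
    thus ?thesis unfolding delta_def by (simp only: card.empty)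
  qed
  have "global_offensive_alliance V E k T"
    unfolding global_offensive_alliance_def offensive_alliance_def dominating_def
  proof (intro conjI ballI)
    show "T \<noteq> {}" using u0S u0v unfolding T_def by auto
    show "T \<subseteq> V" using SV unfolding T_def by auto
    show "T \<subseteq> V" using SV unfolding T_def by auto
    fix w assume w: "w \<in> boundary V E T"
    show "int (delta E (V - T) w) + k \<le> int (delta E T w)"
    proof (cases "w = v")
      case True thus ?thesis using dv1 dv0 assms(3) by simp
    next
      case False
      hence wVS: "w \<in> V - S" using w unfolding boundary_def T_def by auto
      have "w \<in> boundary V E S" using w wVS unfolding boundary_def T_def by auto
      thus ?thesis using offS eq1 eq2 wVS by simp
    qed
  next
    fix w assume w: "w \<in> V - T"
    show "\<exists>u\<in>T. E w u"
    proof (cases "w = v")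
      case True thus ?thesis using u0 u0S u0v unfolding T_def by auto
    next
      case False
      hence "w \<in> V - S" using w unfolding T_def by auto
      thus ?thesis using domS notnb unfolding T_def by fastforce
    qed
  qed
  thus False using minS TS by blast
qed

end
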